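(* Let $(S,\mu)$ be a complete positive measure space, let $X$ be a Banach space whose norm is Fréchet differentiable, and let $1<p<\infty$, $p\neq 2$. If $f\in L^p(\mu,X)$ is a non-zero left symmetric point or a non-zero right symmetric point of $L^p(\mu,X)$, then $Z(f)^c=\{s\in S:f(s)\neq0\}$ is either an atom or a disjoint union of exactly two atoms.
   Context: $L^p(\mu,X)$ is the Lebesgue–Bochner space of (classes of a.e. equal) strongly measurable $f:S\to X$ with $\|f\|_p=(\int_S\|f(s)\|^p\,d\mu(s))^{1/p}<\infty$; $Z(f)=\{s:f(s)=0\}$. In a normed space $Y$ over $\mathbb{K}$, $x\perp_{BJ}y$ means $\|x+\lambda y\|\ge\|x\|$ for all $\lambda\in\mathbb{K}$; $x$ is a left symmetric point if $x\perp_{BJ}y$ implies $y\perp_{BJ}x$ for all $y\in Y$, and a right symmetric point if $y\perp_{BJ}x$ implies $x\perp_{BJ}y$ for all $y\in Y$. The norm of $X$ is Fréchet differentiable if for every non-zero $x$ there is $\varphi\in X^*$ with $\lim_{h\to0}\big|\|x+h\|-\|x\|-\varphi(h)\big|/\|h\|=0$. A measurable set $A$ is an atom if $\mu(A)>0$ and every measurable $B\subseteq A$ has $\mu(B)=0$ or $\mu(B)=\mu(A)$. *)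

theory Defs
  imports "HOL-Analysis.Analysis"
begin

text \<open>A complex Banach space is modelled as a real Banach space together with a
  complex structure J (multiplication by i).\<close>

definition scal :: "('a::real_normed_vector \<Rightarrow> 'a) \<Rightarrow> complex \<Rightarrow> 'a \<Rightarrow> 'a" where
  "scal J c x = Re c *\<^sub>R x + Im c *\<^sub>R J x"

definition complex_structure :: "('a::real_normed_vector \<Rightarrow> 'a) \<Rightarrow> bool" where
  "complex_structure J \<longleftrightarrow> linear J \<and> (\<forall>x. J (J x) = - x)
     \<and> (\<forall>c x. norm (scal J c x) = cmod c * norm x)"

definition scalar_field :: "complex set \<Rightarrow> ('a::real_normed_vector \<Rightarrow> 'a) \<Rightarrow> bool" where
  "scalar_field K J \<longleftrightarrow> K = range complex_of_real \<or> (K = UNIV \<and> complex_structure J)"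

definition frechet_diff_norm :: "'a::real_normed_vector itself \<Rightarrow> bool" where
  "frechet_diff_norm _ \<longleftrightarrow> (\<forall>x::'a. x \<noteq> 0 \<longrightarrow> norm differentiable (at x))"

definition strongly_measurable :: "'s measure \<Rightarrow> ('s \<Rightarrow> 'a::real_normed_vector) \<Rightarrow> bool" where
  "strongly_measurable M f \<longleftrightarrow>
     (\<exists>u. (\<forall>n. simple_function M (u n)) \<and> (AE s in M. (\<lambda>n. u n s) \<longlonglongrightarrow> f s))"

definition Lp_space :: "'s measure \<Rightarrow> real \<Rightarrow> ('s \<Rightarrow> 'a::real_normed_vector) set" where
  "Lp_space M p = {f. strongly_measurable M f \<and>
                      (\<integral>\<^sup>+ s. ennreal (norm (f s) powr p) \<partial>M) < \<infinity>}"

definition Lp_norm :: "'s measure \<Rightarrow> real \<Rightarrow> ('s \<Rightarrow> 'a::real_normed_vector) \<Rightarrow> real" where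
  "Lp_norm M p f = (enn2real (\<integral>\<^sup>+ s. ennreal (norm (f s) powr p) \<partial>M)) powr (1 / p)"

text \<open>Birkhoff-James orthogonality in L^p(mu,X) (on representatives; the norm only
  depends on the a.e.-class).\<close>
definition Lp_bj_orth :: "'s measure \<Rightarrow> real \<Rightarrow> complex set \<Rightarrow> ('a::real_normed_vector \<Rightarrow> 'a)
      \<Rightarrow> ('s \<Rightarrow> 'a) \<Rightarrow> ('s \<Rightarrow> 'a) \<Rightarrow> bool" where
  "Lp_bj_orth M p K J f g \<longleftrightarrow>
     (\<forall>c\<in>K. Lp_norm M p (\<lambda>s. f s + scal J c (g s)) \<ge> Lp_norm M p f)"

definition Lp_left_symmetric where
  "Lp_left_symmetric M p K J f \<longleftrightarrow>
     (\<forall>g\<in>Lp_space M p. Lp_bj_orth M p K J f g \<longrightarrow> Lp_bj_orth M p K J g f)"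

definition Lp_right_symmetric where
  "Lp_right_symmetric M p K J f \<longleftrightarrow>
     (\<forall>g\<in>Lp_space M p. Lp_bj_orth M p K J g f \<longrightarrow> Lp_bj_orth M p K J f g)"

definition atom :: "'s measure \<Rightarrow> 's set \<Rightarrow> bool" where
  "atom M A \<longleftrightarrow> A \<in> sets M \<and> emeasure M A > 0 \<and>
     (\<forall>B\<in>sets M. B \<subseteq> A \<longrightarrow> emeasure M B = 0 \<or> emeasure M B = emeasure M A)"

end

theory Submission
  imports Defs
begin

lemma bern_powr:
  fixes y p :: real
  assumes "p \<ge> 1" "y \<ge> 0"
  shows "y powr p \<ge> 1 + p * (y - 1)"
proof (cases "y = 0")
  case True then show ?thesis using assms by simp
next
  case False
  then have y: "y > 0" using assms by simp
  have "y powr p - 1 powr p \<ge> (p * 1 powr (p - 1)) * (y - 1)"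
    by (rule convex_on_imp_above_tangent[where A="{0<..}"])
       (use assms y in \<open>auto intro!: powr_convex derivative_eq_intros simp: interior_open\<close>)
  then show ?thesis by simp
qed

lemma cmod_powr_ge:
  fixes p :: real and z :: complex
  assumes "p \<ge> 1"
  shows "cmod (1 + z) powr p \<ge> 1 + p * Re z"
proof (cases "1 + Re z \<ge> 0")
  case True
  have "cmod (1 + z) \<ge> 1 + Re z"
    using complex_Re_le_cmod[of "1+z"] by simp
  then have "cmod (1 + z) powr p \<ge> (1 + Re z) powr p"
    using True assms by (intro powr_mono2) auto
  moreover have "(1 + Re z) powr p \<ge> 1 + p * (1 + Re z - 1)"
    using bern_powr[OF assms True] .
  ultimately show ?thesis by simp
next
  case False
  then have "1 + p * Re z \<le> 0" using assms
  proof -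
    have "p * Re z \<le> 1 * Re z" using False assms by (intro mult_right_mono_neg) auto
    then show ?thesis using False by linarith
  qed
  then show ?thesis using powr_ge_zero[of "cmod (1 + z)" p] by linarith
qed

lemma cmod_powr_ge2:
  fixes p \<beta> :: real and z :: complex
  assumes "p \<ge> 1" "\<beta> > 0"
  shows "cmod (of_real \<beta> + z) powr p \<ge> \<beta> powr p + p * \<beta> powr (p - 1) * Re z"
proof -
  have eq: "of_real \<beta> + z = of_real \<beta> * (1 + z / of_real \<beta>)"
    using assms by (simp add: field_simps)
  have "cmod (of_real \<beta> + z) powr p = \<beta> powr p * cmod (1 + z / of_real \<beta>) powr p"
    unfolding eq norm_mult using assms by (simp add: powr_mult)
  also have "\<dots> \<ge> \<beta> powr p * (1 + p * Re (z / of_real \<beta>))"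
    using cmod_powr_ge[OF assms(1), of "z / of_real \<beta>"] assms by (intro mult_left_mono) auto
  also have "\<beta> powr p * (1 + p * Re (z / of_real \<beta>)) = \<beta> powr p + p * (\<beta> powr p / \<beta>) * Re z"
    using assms by (simp add: field_simps Re_divide_of_real)
  also have "\<beta> powr p / \<beta> = \<beta> powr (p - 1)"
    using assms by (simp add: powr_diff)
  finally show ?thesis by simp
qed

lemma decrease_exists:
  fixes a b \<alpha> p :: real
  assumes "a > 0" "b > 0" "\<alpha> > 0" "p > 1" "a \<noteq> b * \<alpha> powr (p - 1)"
  shows "\<exists>c. a * \<bar>1 + c\<bar> powr p + b * \<bar>c - \<alpha>\<bar> powr p < a + b * \<alpha> powr p"
proof (rule ccontr)
  assume H: "\<not> ?thesis"
  define F where "F c = a * (1 + c) powr p + b * (\<alpha> - c) powr p" for c :: real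
  have D: "(F has_real_derivative (a * (p * 1 powr (p - 1)) + b * (p * \<alpha> powr (p - 1) * (-1)))) (at 0)"
    unfolding F_def using assms by (auto intro!: derivative_eq_intros)
  have "\<forall>y. \<bar>0 - y\<bar> < min 1 \<alpha> \<longrightarrow> F 0 \<le> F y"
  proof (intro allI impI)
    fix y :: real assume "\<bar>0 - y\<bar> < min 1 \<alpha>"
    then have y: "1 + y > 0" "\<alpha> - y > 0" by auto
    have "\<not> a * \<bar>1 + y\<bar> powr p + b * \<bar>y - \<alpha>\<bar> powr p < a + b * \<alpha> powr p" using H by blast
    moreover have "\<bar>1 + y\<bar> = 1 + y" "\<bar>y - \<alpha>\<bar> = \<alpha> - y" using y by auto
    ultimately show "F 0 \<le> F y" unfolding F_def by simp
  qed
  then have "a * (p * 1 powr (p - 1)) + b * (p * \<alpha> powr (p - 1) * (-1)) = 0"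
    using DERIV_local_min[OF D, of "min 1 \<alpha>"] assms by auto
  then have "p * (a - b * \<alpha> powr (p - 1)) = 0" by (simp add: algebra_simps)
  then show False using assms by simp
qed

lemma powr_fix:
  fixes x q :: real
  assumes "x > 0" "x powr q = x" "q \<noteq> 1"
  shows "x = 1"
proof (rule ccontr)
  assume "x \<noteq> 1"
  then have "x powr q = x powr 1 \<longleftrightarrow> q = 1" using powr_inj assms by blast
  then show False using assms by simp
qed

lemma scal_norm1:
  assumes "scalar_field K J" "c \<in> K"
  shows "norm (x + scal J c (t *\<^sub>R x)) = cmod (1 + c * of_real t) * norm x"
  using assms(1) unfolding scalar_field_def
proof
  assume "K = range complex_of_real"
  then obtain r where c: "c = of_real r" using assms(2) by auto
  have "x + scal J c (t *\<^sub>R x) = (1 + r * t) *\<^sub>R x"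
    by (simp add: c scal_def algebra_simps)
  moreover have "1 + c * of_real t = of_real (1 + r * t)" by (simp add: c)
  ultimately show ?thesis by (simp only: norm_scaleR norm_of_real)
next
  assume H: "K = UNIV \<and> complex_structure J"
  then have lin: "linear J" and nrm: "\<And>d y. norm (scal J d y) = cmod d * norm y"
    unfolding complex_structure_def by auto
  have "J (t *\<^sub>R x) = t *\<^sub>R J x" using lin by (simp add: linear.scaleR)
  then have "x + scal J c (t *\<^sub>R x) = scal J (1 + c * of_real t) x"
    by (simp add: scal_def algebra_simps)
  then show ?thesis using nrm by simp
qed

lemma scal_norm2:
  assumes "scalar_field K J" "c \<in> K"
  shows "norm (t *\<^sub>R x + scal J c x) = cmod (of_real t + c) * norm x"
  using assms(1) unfolding scalar_field_def
proof
  assume "K = range complex_of_real"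
  then obtain r where c: "c = of_real r" using assms(2) by auto
  have "t *\<^sub>R x + scal J c x = (t + r) *\<^sub>R x"
    by (simp add: c scal_def algebra_simps)
  moreover have "of_real t + c = of_real (t + r)" by (simp add: c)
  ultimately show ?thesis by (simp only: norm_scaleR norm_of_real)
next
  assume H: "K = UNIV \<and> complex_structure J"
  then have nrm: "\<And>d y. norm (scal J d y) = cmod d * norm y"
    unfolding complex_structure_def by auto
  have "t *\<^sub>R x + scal J c x = scal J (of_real t + c) x"
    by (simp add: scal_def algebra_simps)
  then show ?thesis using nrm by simp
qed

lemma scal_zero: "scal J 0 x = 0" by (simp add: scal_def)

lemma zero_in_K: "scalar_field K J \<Longrightarrow> 0 \<in> K"
  unfolding scalar_field_def by auto

lemma real_in_K: "scalar_field K J \<Longrightarrow> complex_of_real r \<in> K"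
  unfolding scalar_field_def by auto

lemma sm_borel:
  fixes f :: "'s \<Rightarrow> 'a::real_normed_vector"
  assumes cm: "complete_measure M" and sm: "strongly_measurable M f"
  shows "f \<in> borel_measurable M"
proof -
  obtain u where u: "\<And>n. simple_function M (u n)" and ae: "AE s in M. (\<lambda>n. u n s) \<longlonglongrightarrow> f s"
    using sm unfolding strongly_measurable_def by blast
  obtain N where N: "{s \<in> space M. \<not> (\<lambda>n. u n s) \<longlonglongrightarrow> f s} \<subseteq> N" "emeasure M N = 0" "N \<in> sets M"
    using ae by (rule AE_E)
  define g where "g s = (if s \<in> N then 0 else f s)" for s
  have g: "g \<in> borel_measurable M"
  proof (rule borel_measurable_LIMSEQ_metric)
    show "(\<lambda>s. if s \<in> N then 0 else u i s) \<in> borel_measurable M" for i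
      using N(3) u by (intro measurable_If_set) (auto intro: borel_measurable_simple_function)
    show "(\<lambda>i. if s \<in> N then 0 else u i s) \<longlonglongrightarrow> g s" if "s \<in> space M" for s
      using N(1) that by (auto simp: g_def)
  qed
  show ?thesis
  proof (rule borel_measurableI)
    fix T :: "'a set" assume "open T"
    have "f -` T \<inter> space M = ((g -` T \<inter> space M) - N) \<union> (f -` T \<inter> space M \<inter> N)"
      by (auto simp: g_def)
    moreover have "f -` T \<inter> space M \<inter> N \<in> sets M"
      using complete_measure.complete[OF cm, of "f -` T \<inter> space M \<inter> N" N] N(2,3) by (auto simp: null_sets_def)
    moreover have "g -` T \<inter> space M \<in> sets M"
      using g \<open>open T\<close> by (auto intro: borel_open measurable_sets)
    ultimately show "f -` T \<inter> space M \<in> sets M" using N(3) by (metis sets.Diff sets.Un)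
  qed
qed

lemma sm_scale:
  fixes f :: "'s \<Rightarrow> 'a::real_normed_vector"
  assumes sm: "strongly_measurable M f" and P: "P \<in> sets M"
  shows "strongly_measurable M (\<lambda>s. (if s \<in> P then a else b) *\<^sub>R f s)"
proof -
  obtain u where u: "\<And>n. simple_function M (u n)" and ae: "AE s in M. (\<lambda>n. u n s) \<longlonglongrightarrow> f s"
    using sm unfolding strongly_measurable_def by blast
  have h: "simple_function M (\<lambda>s. if s \<in> P then a else b)"
    using P by (intro simple_function_If_set) auto
  have "simple_function M (\<lambda>s. (if s \<in> P then a else b) *\<^sub>R u n s)" for n
    using simple_function_compose2[OF h u, of "(*\<^sub>R)"] .
  moreover have "AE s in M. (\<lambda>n. (if s \<in> P then a else b) *\<^sub>R u n s) \<longlonglongrightarrow> (if s \<in> P then a else b) *\<^sub>R f s"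
    using ae by eventually_elim (intro tendsto_scaleR tendsto_const)
  ultimately show ?thesis unfolding strongly_measurable_def
    by (intro exI[where x="\<lambda>n s. (if s \<in> P then a else b) *\<^sub>R u n s"]) simp
qed

definition wN :: "'s measure \<Rightarrow> real \<Rightarrow> ('s \<Rightarrow> 'a::real_normed_vector) \<Rightarrow> 's set \<Rightarrow> real" where
  "wN M p f E = enn2real (\<integral>\<^sup>+ s. ennreal (norm (f s) powr p) * indicator E s \<partial>M)"

lemma wN_fin:
  assumes fin: "(\<integral>\<^sup>+ s. ennreal (norm (f s) powr p) \<partial>M) < \<infinity>"
  shows "(\<integral>\<^sup>+ s. ennreal (norm (f s) powr p) * indicator E s \<partial>M) = ennreal (wN M p f E)"
proof -
  have "(\<integral>\<^sup>+ s. ennreal (norm (f s) powr p) * indicator E s \<partial>M) \<le> (\<integral>\<^sup>+ s. ennreal (norm (f s) powr p) \<partial>M)"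
    by (intro nn_integral_mono) (auto simp: indicator_def)
  then have "(\<integral>\<^sup>+ s. ennreal (norm (f s) powr p) * indicator E s \<partial>M) < \<infinity>" using fin by simp
  then show ?thesis unfolding wN_def by (simp add: ennreal_enn2real_if)
qed

lemma wN_nonneg: "wN M p f E \<ge> 0" unfolding wN_def by simp

lemma int_split:
  fixes f :: "'s \<Rightarrow> 'a::real_normed_vector"
  assumes f: "f \<in> borel_measurable M" and P: "P \<in> sets M"
    and \<phi>: "\<phi> a \<ge> 0" "\<phi> b \<ge> 0"
    and fin: "(\<integral>\<^sup>+ s. ennreal (norm (f s) powr p) \<partial>M) < \<infinity>"
  shows "(\<integral>\<^sup>+ s. ennreal (\<phi> (if s \<in> P then a else b) * norm (f s) powr p) \<partial>M)
       = ennreal (\<phi> a * wN M p f P + \<phi> b * wN M p f (space M - P))"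
proof -
  have "(\<integral>\<^sup>+ s. ennreal (\<phi> (if s \<in> P then a else b) * norm (f s) powr p) \<partial>M)
      = (\<integral>\<^sup>+ s. ennreal (\<phi> a) * (ennreal (norm (f s) powr p) * indicator P s)
              + ennreal (\<phi> b) * (ennreal (norm (f s) powr p) * indicator (space M - P) s) \<partial>M)"
    by (intro nn_integral_cong) (auto simp: indicator_def ennreal_mult \<phi>)
  also have "\<dots> = ennreal (\<phi> a) * (\<integral>\<^sup>+ s. ennreal (norm (f s) powr p) * indicator P s \<partial>M)
              + ennreal (\<phi> b) * (\<integral>\<^sup>+ s. ennreal (norm (f s) powr p) * indicator (space M - P) s \<partial>M)"
    using f P by (subst nn_integral_add) (auto simp: nn_integral_cmult)
  also have "\<dots> = ennreal (\<phi> a * wN M p f P + \<phi> b * wN M p f (space M - P))"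
    using wN_fin[OF fin] \<phi> wN_nonneg[of M p f]
    by (subst ennreal_plus) (auto simp: ennreal_mult)
  finally show ?thesis .
qed

lemma gen:
  fixes f :: "'s \<Rightarrow> 'a::real_normed_vector"
  assumes sf: "scalar_field K J" and fL: "f \<in> Lp_space M p" and fb: "f \<in> borel_measurable M"
    and P: "P \<in> sets M"
  shows "(\<lambda>s. (if s \<in> P then u else v) *\<^sub>R f s) \<in> Lp_space M p"
    and "c \<in> K \<Longrightarrow> Lp_norm M p (\<lambda>s. f s + scal J c ((if s \<in> P then u else v) *\<^sub>R f s))
        = (cmod (1 + c * of_real u) powr p * wN M p f P + cmod (1 + c * of_real v) powr p * wN M p f (space M - P)) powr (1 / p)"
    and "c \<in> K \<Longrightarrow> Lp_norm M p (\<lambda>s. (if s \<in> P then u else v) *\<^sub>R f s + scal J c (f s))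
        = (cmod (of_real u + c) powr p * wN M p f P + cmod (of_real v + c) powr p * wN M p f (space M - P)) powr (1 / p)"
proof -
  have fin: "(\<integral>\<^sup>+ s. ennreal (norm (f s) powr p) \<partial>M) < \<infinity>" and sm: "strongly_measurable M f"
    using fL unfolding Lp_space_def by auto
  have "(\<integral>\<^sup>+ s. ennreal (norm ((if s \<in> P then u else v) *\<^sub>R f s) powr p) \<partial>M)
      = (\<integral>\<^sup>+ s. ennreal ((\<lambda>t. \<bar>t\<bar> powr p) (if s \<in> P then u else v) * norm (f s) powr p) \<partial>M)"
    by (intro nn_integral_cong) (simp add: powr_mult)
  also have "\<dots> = ennreal (\<bar>u\<bar> powr p * wN M p f P + \<bar>v\<bar> powr p * wN M p f (space M - P))"
    by (rule int_split[OF fb P _ _ fin]) auto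
  finally show "(\<lambda>s. (if s \<in> P then u else v) *\<^sub>R f s) \<in> Lp_space M p"
    using sm_scale[OF sm P] unfolding Lp_space_def by simp
next
  assume c: "c \<in> K"
  have fin: "(\<integral>\<^sup>+ s. ennreal (norm (f s) powr p) \<partial>M) < \<infinity>"
    using fL unfolding Lp_space_def by auto
  have "(\<integral>\<^sup>+ s. ennreal (norm (f s + scal J c ((if s \<in> P then u else v) *\<^sub>R f s)) powr p) \<partial>M)
      = (\<integral>\<^sup>+ s. ennreal ((\<lambda>t. cmod (1 + c * of_real t) powr p) (if s \<in> P then u else v) * norm (f s) powr p) \<partial>M)"
    by (intro nn_integral_cong) (simp only: scal_norm1[OF sf c] powr_mult norm_ge_zero)
  also have "\<dots> = ennreal (cmod (1 + c * of_real u) powr p * wN M p f P + cmod (1 + c * of_real v) powr p * wN M p f (space M - P))"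
    by (rule int_split[OF fb P _ _ fin]) auto
  finally have eq: "(\<integral>\<^sup>+ s. ennreal (norm (f s + scal J c ((if s \<in> P then u else v) *\<^sub>R f s)) powr p) \<partial>M) = ennreal (cmod (1 + c * of_real u) powr p * wN M p f P + cmod (1 + c * of_real v) powr p * wN M p f (space M - P))" .
  show "Lp_norm M p (\<lambda>s. f s + scal J c ((if s \<in> P then u else v) *\<^sub>R f s))
        = (cmod (1 + c * of_real u) powr p * wN M p f P + cmod (1 + c * of_real v) powr p * wN M p f (space M - P)) powr (1 / p)"
    unfolding Lp_norm_def eq by (subst enn2real_ennreal) (auto intro!: add_nonneg_nonneg mult_nonneg_nonneg wN_nonneg)
next
  assume c: "c \<in> K"
  have fin: "(\<integral>\<^sup>+ s. ennreal (norm (f s) powr p) \<partial>M) < \<infinity>"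
    using fL unfolding Lp_space_def by auto
  have "(\<integral>\<^sup>+ s. ennreal (norm ((if s \<in> P then u else v) *\<^sub>R f s + scal J c (f s)) powr p) \<partial>M)
      = (\<integral>\<^sup>+ s. ennreal ((\<lambda>t. cmod (of_real t + c) powr p) (if s \<in> P then u else v) * norm (f s) powr p) \<partial>M)"
    by (intro nn_integral_cong) (simp only: scal_norm2[OF sf c] powr_mult norm_ge_zero)
  also have "\<dots> = ennreal (cmod (of_real u + c) powr p * wN M p f P + cmod (of_real v + c) powr p * wN M p f (space M - P))"
    by (rule int_split[OF fb P _ _ fin]) auto
  finally have eq: "(\<integral>\<^sup>+ s. ennreal (norm ((if s \<in> P then u else v) *\<^sub>R f s + scal J c (f s)) powr p) \<partial>M) = ennreal (cmod (of_real u + c) powr p * wN M p f P + cmod (of_real v + c) powr p * wN M p f (space M - P))" .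
  show "Lp_norm M p (\<lambda>s. (if s \<in> P then u else v) *\<^sub>R f s + scal J c (f s))
        = (cmod (of_real u + c) powr p * wN M p f P + cmod (of_real v + c) powr p * wN M p f (space M - P)) powr (1 / p)"
    unfolding Lp_norm_def eq by (subst enn2real_ennreal) (auto intro!: add_nonneg_nonneg mult_nonneg_nonneg wN_nonneg)
qed

lemma core:
  fixes f :: "'s \<Rightarrow> 'a::real_normed_vector"
  assumes sf: "scalar_field K J" and p: "1 < p" "p \<noteq> 2"
    and fL: "f \<in> Lp_space M p" and fb: "f \<in> borel_measurable M"
    and P: "P \<in> sets M" and a: "wN M p f P > 0" and b: "wN M p f (space M - P) > 0"
    and ab: "wN M p f P \<noteq> wN M p f (space M - P)"
  shows "\<not> Lp_left_symmetric M p K J f \<and> \<not> Lp_right_symmetric M p K J f"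
proof -
  define A where "A = wN M p f P"
  define B where "B = wN M p f (space M - P)"
  have A: "A > 0" and B: "B > 0" and AB: "A \<noteq> B" using a b ab by (auto simp: A_def B_def)
  have p1: "p \<ge> 1" using p by simp
  have ip: "1 / p > 0" using p by simp
  note G = gen[OF sf fL fb P]
  note K0 = zero_in_K[OF sf]
  have Lf: "Lp_norm M p f = (A + B) powr (1 / p)"
  proof -
    have "(\<lambda>s. f s + scal J 0 ((if s \<in> P then (0::real) else 0) *\<^sub>R f s)) = f"
      by (simp add: scal_zero)
    then show ?thesis using G(2)[OF K0, of 0 0] by (simp add: A_def B_def)
  qed
  have Lg: "Lp_norm M p (\<lambda>s. (if s \<in> P then u else v) *\<^sub>R f s)
      = (\<bar>u\<bar> powr p * A + \<bar>v\<bar> powr p * B) powr (1 / p)" for u v :: real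
  proof -
    have "(\<lambda>s. (if s \<in> P then u else v) *\<^sub>R f s + scal J 0 (f s)) = (\<lambda>s. (if s \<in> P then u else v) *\<^sub>R f s)"
      by (simp add: scal_zero)
    then show ?thesis using G(3)[OF K0, of u v] by (simp add: A_def B_def)
  qed
  have notL: "\<not> Lp_left_symmetric M p K J f"
  proof
    assume LS: "Lp_left_symmetric M p K J f"
    define \<alpha> where "\<alpha> = A / B"
    have al: "\<alpha> > 0" using A B by (simp add: \<alpha>_def)
    define g where "g = (\<lambda>s. (if s \<in> P then 1 else - \<alpha>) *\<^sub>R f s)"
    have gL: "g \<in> Lp_space M p" unfolding g_def by (rule G(1))
    have orth: "Lp_bj_orth M p K J f g"
      unfolding Lp_bj_orth_def
    proof
      fix c assume c: "c \<in> K"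
      have e1: "cmod (1 + c * of_real 1) powr p \<ge> 1 + p * Re c"
        using cmod_powr_ge[OF p1, of c] by simp
      have e2: "cmod (1 + c * of_real (- \<alpha>)) powr p \<ge> 1 + p * (- \<alpha> * Re c)"
        using cmod_powr_ge[OF p1, of "c * of_real (- \<alpha>)"] by (simp add: algebra_simps)
      have "A + B = (1 + p * Re c) * A + (1 + p * (- \<alpha> * Re c)) * B"
        using B by (simp add: \<alpha>_def field_simps)
      also have "\<dots> \<le> cmod (1 + c * of_real 1) powr p * A + cmod (1 + c * of_real (- \<alpha>)) powr p * B"
        using A B by (intro add_mono mult_right_mono e1 e2) auto
      finally have "(A + B) powr (1 / p) \<le> (cmod (1 + c * of_real 1) powr p * A + cmod (1 + c * of_real (- \<alpha>)) powr p * B) powr (1 / p)"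
        using A B ip by (intro powr_mono2) auto
      then show "Lp_norm M p (\<lambda>s. f s + scal J c (g s)) \<ge> Lp_norm M p f"
        unfolding g_def G(2)[OF c] Lf A_def B_def .
    qed
    have "A \<noteq> B * \<alpha> powr (p - 1)"
    proof
      assume "A = B * \<alpha> powr (p - 1)"
      then have "\<alpha> powr (p - 1) = \<alpha>" using B by (simp add: \<alpha>_def field_simps)
      then have "\<alpha> = 1" using powr_fix[OF al] p by auto
      then show False using AB B by (simp add: \<alpha>_def)
    qed
    then obtain c where c: "A * \<bar>1 + c\<bar> powr p + B * \<bar>c - \<alpha>\<bar> powr p < A + B * \<alpha> powr p"
      using decrease_exists[OF A B al p(1)] by blast
    have "Lp_norm M p (\<lambda>s. g s + scal J (of_real c) (f s)) < Lp_norm M p g"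
    proof -
      have "Lp_norm M p (\<lambda>s. g s + scal J (of_real c) (f s))
          = (\<bar>1 + c\<bar> powr p * A + \<bar>c - \<alpha>\<bar> powr p * B) powr (1 / p)"
      proof -
        have "cmod (of_real 1 + of_real c) = \<bar>1 + c\<bar>" by (metis norm_of_real of_real_add)
        moreover have "cmod (of_real (- \<alpha>) + of_real c) = \<bar>c - \<alpha>\<bar>" by (metis norm_of_real of_real_add add.commute diff_conv_add_uminus)
        ultimately show ?thesis unfolding g_def G(3)[OF real_in_K[OF sf]] A_def B_def by simp
      qed
      also have "\<dots> < (\<bar>1\<bar> powr p * A + \<bar>- \<alpha>\<bar> powr p * B) powr (1 / p)"
        using c al A B ip by (intro powr_less_mono2) (auto simp: mult.commute)
      also have "\<dots> = Lp_norm M p g" unfolding g_def Lg ..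
      finally show ?thesis .
    qed
    then have "\<not> Lp_bj_orth M p K J g f"
      unfolding Lp_bj_orth_def using real_in_K[OF sf, of c] by force
    then show False using LS orth gL unfolding Lp_left_symmetric_def by blast
  qed
  have notR: "\<not> Lp_right_symmetric M p K J f"
  proof
    assume RS: "Lp_right_symmetric M p K J f"
    define \<beta> where "\<beta> = (A / B) powr (1 / (p - 1))"
    have be: "\<beta> > 0" using A B by (simp add: \<beta>_def)
    have bp: "\<beta> powr (p - 1) = A / B"
      using A B p by (simp add: \<beta>_def powr_powr)
    then have bpA: "B * \<beta> powr (p - 1) = A" using B by simp
    define g where "g = (\<lambda>s. (if s \<in> P then 1 else - \<beta>) *\<^sub>R f s)"
    have gL: "g \<in> Lp_space M p" unfolding g_def by (rule G(1))
    have orth: "Lp_bj_orth M p K J g f"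
      unfolding Lp_bj_orth_def
    proof
      fix c assume c: "c \<in> K"
      have e1: "cmod (of_real 1 + c) powr p \<ge> 1 + p * Re c"
        using cmod_powr_ge[OF p1, of c] by simp
      have "cmod (of_real (- \<beta>) + c) = cmod (of_real \<beta> + - c)"
        by (metis minus_add_distrib minus_minus norm_minus_cancel of_real_minus)
      then have e2: "cmod (of_real (- \<beta>) + c) powr p \<ge> \<beta> powr p + p * \<beta> powr (p - 1) * (- Re c)"
        using cmod_powr_ge2[OF p1 be, of "- c"] by simp
      have "A + \<beta> powr p * B = (1 + p * Re c) * A + (\<beta> powr p + p * \<beta> powr (p - 1) * (- Re c)) * B"
        using bpA by (simp add: algebra_simps)
      also have "\<dots> \<le> cmod (of_real 1 + c) powr p * A + cmod (of_real (- \<beta>) + c) powr p * B"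
        using A B by (intro add_mono mult_right_mono e1 e2) auto
      finally have "(\<bar>1\<bar> powr p * A + \<bar>- \<beta>\<bar> powr p * B) powr (1 / p) \<le> (cmod (of_real 1 + c) powr p * A + cmod (of_real (- \<beta>) + c) powr p * B) powr (1 / p)"
        using A B ip be by (intro powr_mono2) auto
      then show "Lp_norm M p (\<lambda>s. g s + scal J c (f s)) \<ge> Lp_norm M p g"
        unfolding g_def G(3)[OF c] Lg A_def B_def .
    qed
    have "A \<noteq> (B * \<beta> powr p) * (1 / \<beta>) powr (p - 1)"
    proof
      assume H: "A = (B * \<beta> powr p) * (1 / \<beta>) powr (p - 1)"
      have "\<beta> powr p * (1 / \<beta>) powr (p - 1) = \<beta>"
        using be by (simp add: powr_divide powr_diff)
      then have "A = B * \<beta>" using H by (simp add: mult.assoc)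
      then have "\<beta> powr (p - 1) = \<beta>" using bpA B by simp
      then have "\<beta> = 1" using powr_fix[OF be] p by auto
      then show False using AB bpA by simp
    qed
    then obtain c where c: "A * \<bar>1 + c\<bar> powr p + (B * \<beta> powr p) * \<bar>c - 1 / \<beta>\<bar> powr p < A + (B * \<beta> powr p) * (1 / \<beta>) powr p"
      using decrease_exists[OF A _ _ p(1), of "B * \<beta> powr p" "1 / \<beta>"] B be by auto
    have "Lp_norm M p (\<lambda>s. f s + scal J (of_real c) (g s)) < Lp_norm M p f"
    proof -
      have e: "\<bar>1 + c * - \<beta>\<bar> powr p = \<beta> powr p * \<bar>c - 1 / \<beta>\<bar> powr p"
      proof -
        have "\<bar>1 + c * - \<beta>\<bar> = \<beta> * \<bar>c - 1 / \<beta>\<bar>"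
          using be by (simp add: field_simps abs_mult[symmetric])
        then show ?thesis using be by (simp add: powr_mult)
      qed
      have "Lp_norm M p (\<lambda>s. f s + scal J (of_real c) (g s))
          = (\<bar>1 + c\<bar> powr p * A + \<bar>1 + c * - \<beta>\<bar> powr p * B) powr (1 / p)"
      proof -
        have "cmod (1 + of_real c * of_real 1) = \<bar>1 + c\<bar>" by (metis norm_of_real of_real_add of_real_1 mult_1_right)
        moreover have "cmod (1 + of_real c * of_real (- \<beta>)) = \<bar>1 + c * - \<beta>\<bar>" by (metis norm_of_real of_real_add of_real_1 of_real_mult)
        ultimately show ?thesis unfolding g_def G(2)[OF real_in_K[OF sf]] A_def B_def by simp
      qed
      also have "\<dots> < (A + B) powr (1 / p)"
      proof (intro powr_less_mono2)
        have "(B * \<beta> powr p) * (1 / \<beta>) powr p = B" using be by (simp add: powr_divide)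
        then show "\<bar>1 + c\<bar> powr p * A + \<bar>1 + c * - \<beta>\<bar> powr p * B < A + B"
        proof -
          have "\<bar>1 + c\<bar> powr p * A + \<bar>1 + c * - \<beta>\<bar> powr p * B = A * \<bar>1 + c\<bar> powr p + (B * \<beta> powr p) * \<bar>c - 1 / \<beta>\<bar> powr p"
            unfolding e by (simp add: algebra_simps)
          also have "\<dots> < A + (B * \<beta> powr p) * (1 / \<beta>) powr p" by (rule c)
          finally show ?thesis using \<open>(B * \<beta> powr p) * (1 / \<beta>) powr p = B\<close> by simp
        qed
      qed (use ip A B in auto)
      also have "\<dots> = Lp_norm M p f" using Lf ..
      finally show ?thesis .
    qed
    then have "\<not> Lp_bj_orth M p K J f g"
      unfolding Lp_bj_orth_def using real_in_K[OF sf, of c] by force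
    then show False using RS orth gL unfolding Lp_right_symmetric_def by blast
  qed
  show ?thesis using notL notR by blast
qed

lemma wN_add:
  fixes f :: "'s \<Rightarrow> 'a::real_normed_vector"
  assumes fb: "f \<in> borel_measurable M" and fin: "(\<integral>\<^sup>+ s. ennreal (norm (f s) powr p) \<partial>M) < \<infinity>"
    and E: "E \<in> sets M" and F: "F \<in> sets M" and d: "E \<inter> F = {}"
  shows "wN M p f (E \<union> F) = wN M p f E + wN M p f F"
proof -
  have "ennreal (wN M p f (E \<union> F)) = (\<integral>\<^sup>+ s. ennreal (norm (f s) powr p) * indicator (E \<union> F) s \<partial>M)"
    using wN_fin[OF fin] by simp
  also have "\<dots> = (\<integral>\<^sup>+ s. ennreal (norm (f s) powr p) * indicator E s + ennreal (norm (f s) powr p) * indicator F s \<partial>M)"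
    using d by (intro nn_integral_cong) (auto simp: indicator_def)
  also have "\<dots> = (\<integral>\<^sup>+ s. ennreal (norm (f s) powr p) * indicator E s \<partial>M) + (\<integral>\<^sup>+ s. ennreal (norm (f s) powr p) * indicator F s \<partial>M)"
    using fb E F by (intro nn_integral_add) auto
  also have "\<dots> = ennreal (wN M p f E) + ennreal (wN M p f F)"
    using wN_fin[OF fin] by simp
  also have "\<dots> = ennreal (wN M p f E + wN M p f F)"
    by (rule ennreal_plus[symmetric]) (rule wN_nonneg)+
  finally show ?thesis by (subst (asm) ennreal_inj) (auto simp: wN_nonneg add_nonneg_nonneg)
qed

lemma wN_zero:
  fixes f :: "'s \<Rightarrow> 'a::real_normed_vector"
  assumes "\<And>s. s \<in> space M \<Longrightarrow> s \<in> E \<Longrightarrow> f s = 0"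
  shows "wN M p f E = 0"
proof -
  have "(\<integral>\<^sup>+ s. ennreal (norm (f s) powr p) * indicator E s \<partial>M) = (\<integral>\<^sup>+ s. 0 \<partial>M)"
    using assms by (intro nn_integral_cong) (auto simp: indicator_def)
  then show ?thesis unfolding wN_def by simp
qed

lemma wN_pos:
  fixes f :: "'s \<Rightarrow> 'a::real_normed_vector"
  assumes fb: "f \<in> borel_measurable M" and fin: "(\<integral>\<^sup>+ s. ennreal (norm (f s) powr p) \<partial>M) < \<infinity>"
    and E: "E \<in> sets M" and sub: "\<And>s. s \<in> E \<Longrightarrow> f s \<noteq> 0" and pos: "emeasure M E > 0"
  shows "wN M p f E > 0"
proof (rule ccontr)
  assume "\<not> wN M p f E > 0"
  then have "wN M p f E = 0" using wN_nonneg[of M p f E] by simp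
  then have "(\<integral>\<^sup>+ s. ennreal (norm (f s) powr p) * indicator E s \<partial>M) = 0"
    using wN_fin[OF fin, of E] by simp
  then have "AE s in M. ennreal (norm (f s) powr p) * indicator E s = 0"
    using fb E by (subst (asm) nn_integral_0_iff_AE) auto
  then have "AE s in M. s \<notin> E"
    by eventually_elim (use sub in \<open>auto simp: indicator_def\<close>)
  then have "emeasure M E = 0"
    using AE_iff_measurable[of E M "\<lambda>s. s \<notin> E"] E sets.sets_into_space[OF E] by auto
  then show False using pos by simp
qed

lemma split_nonatom:
  assumes E: "E \<in> sets M" and pos: "emeasure M E > 0" and na: "\<not> atom M E"
  shows "\<exists>E1\<in>sets M. E1 \<subseteq> E \<and> emeasure M E1 > 0 \<and> emeasure M (E - E1) > 0"
proof -
  obtain B where B: "B \<in> sets M" "B \<subseteq> E" "emeasure M B \<noteq> 0" "emeasure M B \<noteq> emeasure M E"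
    using na E pos unfolding atom_def by auto
  have "emeasure M (E - B) \<noteq> 0"
  proof
    assume "emeasure M (E - B) = 0"
    moreover have "emeasure M B + emeasure M (E - B) = emeasure M (B \<union> (E - B))"
      using B E by (intro plus_emeasure) auto
    moreover have "B \<union> (E - B) = E" using B by auto
    ultimately show False using B by simp
  qed
  then show ?thesis using B by (auto intro!: bexI[of _ B] simp: zero_less_iff_neq_zero)
qed

theorem theorem3p13:
  fixes M :: "'s measure" and p :: real and K :: "complex set"
    and J :: "'a::banach \<Rightarrow> 'a" and f :: "'s \<Rightarrow> 'a"
  assumes "complete_measure M"
    and "scalar_field K J"
    and "frechet_diff_norm TYPE('a)"
    and "1 < p" and "p \<noteq> 2"
    and "f \<in> Lp_space M p"
    and "\<not> (AE s in M. f s = 0)"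
    and "Lp_left_symmetric M p K J f \<or> Lp_right_symmetric M p K J f"
  shows "atom M {s \<in> space M. f s \<noteq> 0} \<or>
         (\<exists>A1 A2. atom M A1 \<and> atom M A2 \<and> A1 \<inter> A2 = {} \<and>
                  {s \<in> space M. f s \<noteq> 0} = A1 \<union> A2)"
proof (rule ccontr)
  assume H: "\<not> ?thesis"
  note cm = assms(1) and sf = assms(2) and p = assms(4,5) and fL = assms(6)
  have fb: "f \<in> borel_measurable M"
    using sm_borel[OF cm] fL unfolding Lp_space_def by auto
  have fin: "(\<integral>\<^sup>+ s. ennreal (norm (f s) powr p) \<partial>M) < \<infinity>"
    using fL unfolding Lp_space_def by auto
  define S where "S = {s \<in> space M. f s \<noteq> 0}"
  have "S = f -` (- {0}) \<inter> space M" unfolding S_def by auto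
  then have S: "S \<in> sets M" using measurable_sets[OF fb borel_open[OF open_Compl[OF closed_singleton]]] by simp
  have Spos: "emeasure M S > 0"
  proof (rule ccontr)
    assume "\<not> emeasure M S > 0"
    then have "emeasure M S = 0" by (simp add: zero_less_iff_neq_zero)
    moreover have "{x\<in>space M. \<not> f x = 0} = S" by (simp add: S_def)
    then have "(AE s in M. f s = 0) \<longleftrightarrow> emeasure M S = 0" by (rule AE_iff_measurable[OF S])
    ultimately have "AE s in M. f s = 0" by simp
    then show False using assms(7) by simp
  qed
  let ?n = "wN M p f"
  have coreF: False if P: "P \<in> sets M" "?n P > 0" "?n (space M - P) > 0" "?n P \<noteq> ?n (space M - P)" for P
    using core[OF sf p fL fb P] assms(8) by blast
  have add: "?n (X \<union> Y) = ?n X + ?n Y" if "X \<in> sets M" "Y \<in> sets M" "X \<inter> Y = {}" for X Y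
    by (rule wN_add[OF fb fin that])
  have zero: "?n (space M - S) = 0" by (rule wN_zero) (auto simp: S_def)
  have pos: "?n X > 0" if "X \<in> sets M" "X \<subseteq> S" "emeasure M X > 0" for X
    using wN_pos[OF fb fin that(1) _ that(3)] that(2) by (auto simp: S_def)
  have SS: "S \<subseteq> space M" by (auto simp: S_def)
  have key: False if X: "X \<in> sets M" and Y: "Y \<in> sets M" and XY: "X \<inter> Y = {}" "X \<union> Y = S"
      and eq: "?n X = ?n Y" and Xp: "emeasure M X > 0" and Yp: "emeasure M Y > 0"
      and na: "\<not> atom M X" for X Y
  proof -
    obtain X1 where X1: "X1 \<in> sets M" "X1 \<subseteq> X" "emeasure M X1 > 0" "emeasure M (X - X1) > 0"
      using split_nonatom[OF X Xp na] by blast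
    have X2: "X - X1 \<in> sets M" using X X1 by auto
    have "?n X = ?n X1 + ?n (X - X1)"
      using add[OF X1(1) X2] X1 by (simp add: Un_absorb1 Un_Diff_cancel)
    moreover have "space M - X1 = ((X - X1) \<union> Y) \<union> (space M - S)"
      using XY X1 SS by auto
    moreover have "?n (((X - X1) \<union> Y) \<union> (space M - S)) = ?n (X - X1) + ?n Y + ?n (space M - S)"
    proof -
      have d1: "(X - X1) \<inter> Y = {}" using XY by auto
      have d2: "((X - X1) \<union> Y) \<inter> (space M - S) = {}" using XY by auto
      have m: "(X - X1) \<union> Y \<in> sets M" "space M - S \<in> sets M" using X2 Y S by auto
      show ?thesis using add[OF X2 Y d1] add[OF m d2] by simp
    qed
    moreover have "?n X1 > 0" using pos[OF X1(1)] X1 XY by auto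
    moreover have "?n (X - X1) > 0" using pos[OF X2] X1 XY by auto
    ultimately show False using coreF[OF X1(1)] eq zero by auto
  qed
  have naS: "\<not> atom M S" using H by (simp add: S_def)
  obtain B where B: "B \<in> sets M" "B \<subseteq> S" "emeasure M B > 0" "emeasure M (S - B) > 0"
    using split_nonatom[OF S Spos naS] by blast
  define C where "C = S - B"
  have C: "C \<in> sets M" using B S by (auto simp: C_def)
  have BC: "B \<inter> C = {}" "B \<union> C = S" using B by (auto simp: C_def)
  have nB: "?n B > 0" using pos[OF B(1,2,3)] .
  have nC: "?n C > 0" using pos[OF C _ B(4)[folded C_def]] by (auto simp: C_def)
  have "space M - B = C \<union> (space M - S)" using BC SS by auto
  then have nCB: "?n (space M - B) = ?n C" using add[OF C, of "space M - S"] S zero BC by auto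
  show False
  proof (cases "?n B = ?n C")
    case False
    then show False using coreF[OF B(1) nB] nCB nC by auto
  next
    case True
    have "\<not> atom M B \<or> \<not> atom M C"
    proof (rule ccontr)
      assume "\<not> (\<not> atom M B \<or> \<not> atom M C)"
      then have "atom M B" "atom M C" by auto
      then have "\<exists>A1 A2. atom M A1 \<and> atom M A2 \<and> A1 \<inter> A2 = {} \<and> {s \<in> space M. f s \<noteq> 0} = A1 \<union> A2"
        using BC unfolding S_def by blast
      then show False using H by blast
    qed
    then show False
    proof
      assume "\<not> atom M B"
      then show False using key[OF B(1) C BC True B(3)] B(4) by (simp add: C_def)
    next
      assume "\<not> atom M C"
      then show False using key[OF C B(1) _ _ True[symmetric]] BC B(3,4) by (auto simp: C_def)
    qed
  qed
qed

end
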